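(* Let $X,Z\in\mathbb{R}^{n\times r}$ with $XX^{T}\ne ZZ^{T}$, and let $r^{\star}=\mathrm{rank}(Z)$ with $1\le r^{\star}\le r$. Let $Z_{\perp}=(I-XX^{\dagger})Z$, $$\alpha=\frac{\|Z_{\perp}Z_{\perp}^{T}\|_{F}}{\|XX^{T}-ZZ^{T}\|_{F}},\qquad\beta=\frac{\sigma_{\min}^{2}(X)}{\|XX^{T}-ZZ^{T}\|_{F}}\cdot\frac{\mathrm{tr}(Z_{\perp}Z_{\perp}^{T})}{\|Z_{\perp}Z_{\perp}^{T}\|_{F}}.$$ Then: (1) if $\beta\le\alpha$, then $\alpha^{2}+(r/r^{\star})\beta^{2}\le1$; (2) if $\beta\ge\alpha$, then $\alpha\le1/\sqrt{1+r/r^{\star}}$.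
   Context: $A^{\dagger}$ is the Moore–Penrose pseudoinverse and $\sigma_{\min}(X)$ the $r$-th singular value of $X$. When $Z_{\perp}=0$, $\beta$ may be taken as $\sigma_{\min}^{2}(X)/\|XX^{T}-ZZ^{T}\|_{F}$. *)

theory Defs
  imports "HOL-Analysis.Analysis"
begin

definition frob_norm :: "real^'n^'m \<Rightarrow> real" where
  "frob_norm A = sqrt (\<Sum>i\<in>UNIV. \<Sum>j\<in>UNIV. (A$i$j)^2)"

definition pinv :: "real^'n^'m \<Rightarrow> real^'m^'n" where
  "pinv A = (THE B. A ** B ** A = A \<and> B ** A ** B = B \<and>
                    transpose (A ** B) = A ** B \<and> transpose (B ** A) = B ** A)"

definition min_eigenvalue :: "real^'n^'n \<Rightarrow> real" where
  "min_eigenvalue A = Min {c. \<exists>v. v \<noteq> 0 \<and> A *v v = c *\<^sub>R v}"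

definition sigma_min :: "real^'r^'n \<Rightarrow> real" where
  "sigma_min X = sqrt (min_eigenvalue (transpose X ** X))"

end

theory Submission
  imports Defs
begin


definition orthonormal :: "'a::real_inner set \<Rightarrow> bool" where
  "orthonormal S \<longleftrightarrow> (\<forall>e\<in>S. e \<bullet> e = 1) \<and> (\<forall>e\<in>S. \<forall>f\<in>S. e \<noteq> f \<longrightarrow> e \<bullet> f = 0)"

lemma orthonormal_indep:
  fixes S :: "'a::euclidean_space set"
  assumes "orthonormal S" shows "independent S"
proof (rule pairwise_orthogonal_independent)
  show "pairwise orthogonal S" using assms by (auto simp: orthonormal_def pairwise_def orthogonal_def)
  show "0 \<notin> S" using assms by (auto simp: orthonormal_def)
qed

lemma orthonormal_finite:
  fixes S :: "'a::euclidean_space set"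
  assumes "orthonormal S" shows "finite S"
  using orthonormal_indep[OF assms] finiteI_independent by blast

lemma orthonormal_expand:
  fixes S :: "'a::euclidean_space set"
  assumes "orthonormal S" "x \<in> span S"
  shows "x = (\<Sum>e\<in>S. (x \<bullet> e) *\<^sub>R e)"
proof -
  have fin: "finite S" using orthonormal_finite[OF assms(1)] .
  define p where "p = (\<Sum>e\<in>S. (x \<bullet> e) *\<^sub>R e)"
  have pe: "p \<bullet> f = x \<bullet> f" if "f \<in> S" for f
  proof -
    have "p \<bullet> f = (\<Sum>e\<in>S. (x \<bullet> e) * (e \<bullet> f))" by (simp add: p_def inner_sum_left)
    also have "\<dots> = (\<Sum>e\<in>S. if e = f then x \<bullet> f else 0)"
      by (rule sum.cong) (use assms(1) that in \<open>auto simp: orthonormal_def\<close>)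
    also have "\<dots> = x \<bullet> f" using fin that by simp
    finally show ?thesis .
  qed
  have "x - p \<in> span S" using assms(2) by (simp add: p_def span_diff span_sum span_scale span_base)
  then have "orthogonal (x - p) (x - p)"
    by (rule orthogonal_to_span) (auto simp: orthogonal_def inner_diff_left pe)
  then have "(x - p) \<bullet> (x - p) = 0" by (simp add: orthogonal_def)
  then show ?thesis by (simp add: p_def)
qed

lemma orthonormal_parseval:
  fixes S :: "'a::euclidean_space set"
  assumes "orthonormal S" "x \<in> span S"
  shows "x \<bullet> y = (\<Sum>e\<in>S. (x \<bullet> e) * (e \<bullet> y))"
proof -
  have "x \<bullet> y = (\<Sum>e\<in>S. (x \<bullet> e) *\<^sub>R e) \<bullet> y" using orthonormal_expand[OF assms] by simp
  also have "\<dots> = (\<Sum>e\<in>S. (x \<bullet> e) * (e \<bullet> y))" by (simp add: inner_sum_left)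
  finally show ?thesis .
qed

lemma orthonormal_bessel:
  fixes S :: "'a::euclidean_space set"
  assumes "orthonormal S"
  shows "(\<Sum>e\<in>S. (x \<bullet> e)\<^sup>2) \<le> x \<bullet> x"
proof -
  have fin: "finite S" using orthonormal_finite[OF assms(1)] .
  define p where "p = (\<Sum>e\<in>S. (x \<bullet> e) *\<^sub>R e)"
  have pe: "p \<bullet> f = x \<bullet> f" if "f \<in> S" for f
  proof -
    have "p \<bullet> f = (\<Sum>e\<in>S. (x \<bullet> e) * (e \<bullet> f))" by (simp add: p_def inner_sum_left)
    also have "\<dots> = (\<Sum>e\<in>S. if e = f then x \<bullet> f else 0)"
      by (rule sum.cong) (use assms(1) that in \<open>auto simp: orthonormal_def\<close>)
    also have "\<dots> = x \<bullet> f" using fin that by simp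
    finally show ?thesis .
  qed
  have pp: "p \<bullet> p = (\<Sum>e\<in>S. (x \<bullet> e)\<^sup>2)"
    by (simp add: p_def inner_sum_right pe[unfolded p_def] power2_eq_square)
  have xp: "x \<bullet> p = (\<Sum>e\<in>S. (x \<bullet> e)\<^sup>2)"
    by (simp add: p_def inner_sum_right power2_eq_square)
  have "0 \<le> (x - p) \<bullet> (x - p)" by simp
  also have "\<dots> = x \<bullet> x - 2 * (x \<bullet> p) + p \<bullet> p" by (simp add: inner_diff inner_commute)
  finally show ?thesis using pp xp by simp
qed

lemma adj: "(transpose A *v x) \<bullet> y = x \<bullet> ((A::real^'n^'m) *v y)"
  by (simp add: dot_lmul_matrix)

lemma sym_adj: assumes "transpose G = G" shows "(G *v x) \<bullet> y = x \<bullet> ((G::real^'n^'n) *v y)"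
  using adj[of G x y] assms by simp

lemma quad_zero:
  fixes a b :: real
  assumes "\<And>e. 2*e*a + e\<^sup>2*b \<le> 0" shows "a = 0"
proof -
  define c where "c = \<bar>b\<bar> + 1"
  define e where "e = a / c"
  have pos: "c > 0" by (simp add: c_def)
  have ec: "e * c = a" using pos by (simp add: e_def)
  have "(2*e*a + e\<^sup>2*b) * c\<^sup>2 = 2*(e*c)*a*c + (e*c)\<^sup>2*b" by (simp add: algebra_simps power2_eq_square)
  also have "\<dots> = a\<^sup>2 * (2*c + b)" unfolding ec by (simp add: algebra_simps power2_eq_square)
  finally have "a\<^sup>2 * (2*c + b) = (2*e*a + e\<^sup>2*b) * c\<^sup>2" by simp
  also have "\<dots> \<le> 0" using assms[of e] by (simp add: mult_nonpos_nonneg)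
  finally have "a\<^sup>2 * (2*c + b) \<le> 0" .
  moreover have "2*c + b > 0" unfolding c_def by (cases "b \<ge> 0") auto
  ultimately have "a\<^sup>2 \<le> 0" by (simp add: mult_le_0_iff)
  then show ?thesis by simp
qed

lemma spectral_subspace:
  fixes G :: "real^'n^'n"
  assumes sym: "transpose G = G"
  shows "subspace S \<Longrightarrow> (\<forall>x\<in>S. G *v x \<in> S) \<Longrightarrow>
    \<exists>B. B \<subseteq> S \<and> orthonormal B \<and> span B = S \<and> (\<forall>b\<in>B. G *v b = (b \<bullet> (G *v b)) *\<^sub>R b)"
proof (induction "dim S" arbitrary: S rule: less_induct)
  case less
  note sub = less.prems(1) and inv = less.prems(2)
  show ?case
  proof (cases "S \<subseteq> {0}")
    case True
    then have "S = {0}" using subspace_0[OF sub] by blast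
    then show ?thesis by (intro exI[of _ "{}"]) (auto simp: orthonormal_def)
  next
    case False
    then obtain x where x: "x \<in> S" "x \<noteq> 0" by blast
    define K where "K = S \<inter> sphere 0 1"
    have "compact K" unfolding K_def
      by (intro closed_Int_compact closed_subspace sub compact_sphere)
    moreover have "K \<noteq> {}"
    proof -
      have "(1 / norm x) *\<^sub>R x \<in> K" using x sub by (auto simp: K_def subspace_scale)
      then show ?thesis by blast
    qed
    moreover have "continuous_on K (\<lambda>y. y \<bullet> (G *v y))"
      by (intro continuous_intros linear_continuous_on matrix_vector_mul_linear) (auto intro!: linear_linear)
    ultimately obtain v where v: "v \<in> K" and vmax: "\<And>y. y \<in> K \<Longrightarrow> y \<bullet> (G *v y) \<le> v \<bullet> (G *v v)"
      using continuous_attains_sup by metis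
    define l where "l = v \<bullet> (G *v v)"
    have vS: "v \<in> S" and vv: "v \<bullet> v = 1" using v by (auto simp: K_def dot_square_norm)
    have bound: "y \<bullet> (G *v y) \<le> l * (y \<bullet> y)" if "y \<in> S" for y
    proof (cases "y = 0")
      case True then show ?thesis by simp
    next
      case False
      define u where "u = (1 / norm y) *\<^sub>R y"
      have "u \<in> K" using False that sub by (auto simp: K_def u_def subspace_scale)
      then have "u \<bullet> (G *v u) \<le> l" using vmax l_def by blast
      moreover have "u \<bullet> (G *v u) = (y \<bullet> (G *v y)) / (y \<bullet> y)"
        using False by (simp add: u_def matrix_vector_mult_scaleR dot_square_norm power2_eq_square)
      moreover have "y \<bullet> y > 0" using False by simp
      ultimately show ?thesis by (simp add: divide_le_eq mult.commute)
    qed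
    have crit: "w \<bullet> (G *v v) - l * (v \<bullet> w) = 0" if w: "w \<in> S" for w
    proof (rule quad_zero)
      fix e :: real
      have "(v + e *\<^sub>R w) \<bullet> (G *v (v + e *\<^sub>R w)) \<le> l * ((v + e *\<^sub>R w) \<bullet> (v + e *\<^sub>R w))"
        using bound w vS sub by (simp add: subspace_add subspace_scale)
      moreover have "(v + e *\<^sub>R w) \<bullet> (G *v (v + e *\<^sub>R w)) =
          l + 2 * e * (w \<bullet> (G *v v)) + e\<^sup>2 * (w \<bullet> (G *v w))"
      proof -
        have s1: "v \<bullet> (G *v w) = w \<bullet> (G *v v)"
          using sym_adj[OF sym, of v w] by (simp add: inner_commute)
        show ?thesis
          by (simp add: l_def matrix_vector_right_distrib matrix_vector_mult_scaleR inner_add_left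
            inner_add_right power2_eq_square algebra_simps s1)
      qed
      moreover have "(v + e *\<^sub>R w) \<bullet> (v + e *\<^sub>R w) = 1 + 2 * e * (v \<bullet> w) + e\<^sup>2 * (w \<bullet> w)"
      proof -
        have s2: "w \<bullet> v = v \<bullet> w" by (rule inner_commute)
        show ?thesis using vv by (simp add: inner_add_left inner_add_right power2_eq_square algebra_simps s2)
      qed
      ultimately have "l + 2 * e * (w \<bullet> (G *v v)) + e\<^sup>2 * (w \<bullet> (G *v w)) \<le> l * (1 + 2 * e * (v \<bullet> w) + e\<^sup>2 * (w \<bullet> w))"
        by simp
      then show "2 * e * (w \<bullet> (G *v v) - l * (v \<bullet> w)) + e\<^sup>2 * (w \<bullet> (G *v w) - l * (w \<bullet> w)) \<le> 0"
        by (simp add: algebra_simps)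
    qed
    have eig: "G *v v = l *\<^sub>R v"
    proof -
      define w where "w = G *v v - l *\<^sub>R v"
      have "w \<in> S" using inv vS sub by (simp add: w_def subspace_diff subspace_scale)
      from crit[OF this] have "w \<bullet> w = 0" by (simp add: w_def inner_diff_left inner_diff_right inner_commute algebra_simps)
      then show ?thesis by (simp add: w_def)
    qed
    define S' where "S' = {y \<in> S. v \<bullet> y = 0}"
    have sub': "subspace S'" unfolding S'_def
      using sub by (auto simp: subspace_def inner_add_right)
    have inv': "\<forall>y\<in>S'. G *v y \<in> S'"
    proof
      fix y assume y: "y \<in> S'"
      have "v \<bullet> (G *v y) = (G *v v) \<bullet> y" using sym_adj[OF sym, of v y] by simp
      also have "\<dots> = 0" using y eig by (simp add: S'_def)
      finally show "G *v y \<in> S'" using y inv by (simp add: S'_def)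
    qed
    have "span S' \<subset> span S"
    proof -
      have "S' \<subseteq> S" "v \<in> S" "v \<notin> S'" using vS vv by (auto simp: S'_def)
      then have "S' \<subset> S" by blast
      then show ?thesis using sub sub' by (simp add: span_eq_iff[THEN iffD2])
    qed
    then have "dim S' < dim S" by (rule dim_psubset)
    from less.hyps[OF this sub' inv'] obtain B' where
      B': "B' \<subseteq> S'" "orthonormal B'" "span B' = S'" "\<forall>b\<in>B'. G *v b = (b \<bullet> (G *v b)) *\<^sub>R b" by blast
    have vB': "v \<notin> B'" using B'(1) vv by (auto simp: S'_def)
    show ?thesis
    proof (intro exI[of _ "insert v B'"] conjI)
      show "insert v B' \<subseteq> S" using B'(1) vS by (auto simp: S'_def)
      show "orthonormal (insert v B')" using B'(1,2) vv
        by (auto simp: orthonormal_def S'_def inner_commute)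
      show "span (insert v B') = S"
      proof
        show "span (insert v B') \<subseteq> S" using B'(1) vS sub by (intro span_minimal) (auto simp: S'_def)
        show "S \<subseteq> span (insert v B')"
        proof
          fix y assume y: "y \<in> S"
          have "y - (v \<bullet> y) *\<^sub>R v \<in> S'" using y vS vv sub
            by (simp add: S'_def subspace_diff subspace_scale inner_diff_right)
          then have "y - (v \<bullet> y) *\<^sub>R v \<in> span (insert v B')" using B'(3) span_mono[of B' "insert v B'"] by auto
          moreover have "(v \<bullet> y) *\<^sub>R v \<in> span (insert v B')" by (simp add: span_base span_scale)
          ultimately have "(y - (v \<bullet> y) *\<^sub>R v) + (v \<bullet> y) *\<^sub>R v \<in> span (insert v B')" by (rule span_add)
          then show "y \<in> span (insert v B')" by simp
        qed
      qed
      show "\<forall>b\<in>insert v B'. G *v b = (b \<bullet> (G *v b)) *\<^sub>R b"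
        using B'(4) eig vv by (simp add: l_def)
    qed
  qed
qed


definition fro2 :: "real^'n^'m \<Rightarrow> real" where
  "fro2 A = (\<Sum>i\<in>UNIV. (A$i) \<bullet> (A$i))"

lemma fro2_nonneg: "fro2 A \<ge> 0"
  by (simp add: fro2_def sum_nonneg)

lemma frob_fro2: "frob_norm A = sqrt (fro2 A)"
  by (simp add: frob_norm_def fro2_def inner_vec_def power2_eq_square)

lemma frob_sq: "(frob_norm A)\<^sup>2 = fro2 A"
  using fro2_nonneg[of A] by (simp add: frob_fro2)

lemma frob_nonneg: "frob_norm A \<ge> 0"
  using fro2_nonneg[of A] by (simp add: frob_fro2)

lemma fro2_eq_0: "fro2 A = 0 \<longleftrightarrow> A = 0"
proof
  assume "fro2 A = 0"
  then have "\<forall>i\<in>UNIV. (A$i) \<bullet> (A$i) = 0"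
    unfolding fro2_def by (subst sum_nonneg_eq_0_iff[symmetric]) auto
  then show "A = 0" by (simp add: vec_eq_iff)
qed (simp add: fro2_def)

lemma fro2_transpose: "fro2 (transpose A) = fro2 A"
proof -
  have "fro2 (transpose A) = (\<Sum>i\<in>UNIV. \<Sum>j\<in>UNIV. A$j$i * A$j$i)"
    by (simp add: fro2_def inner_vec_def transpose_def)
  also have "\<dots> = (\<Sum>j\<in>UNIV. \<Sum>i\<in>UNIV. A$j$i * A$j$i)" by (rule sum.swap)
  also have "\<dots> = fro2 A" by (simp add: fro2_def inner_vec_def)
  finally show ?thesis .
qed

lemma fro2_uminus: "fro2 (- A) = fro2 A"
  by (simp add: fro2_def)

lemma trace_fro2: "trace (A ** transpose A) = fro2 A"
  by (simp add: trace_def fro2_def matrix_matrix_mult_def transpose_def inner_vec_def)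

lemma mv_component: "((A::real^'n^'m) *v x) $ i = (A$i) \<bullet> x"
  by (simp add: matrix_vector_mult_def inner_vec_def mult.commute)

lemma mv_sum: "finite U \<Longrightarrow> A *v (\<Sum>u\<in>U. f u) = (\<Sum>u\<in>U. A *v f u)"
  by (induction U rule: finite_induct) (simp_all add: matrix_vector_right_distrib)

lemma norm_mv_sq: "((A::real^'n^'m) *v x) \<bullet> (A *v x) = (\<Sum>i\<in>UNIV. ((A$i) \<bullet> x)\<^sup>2)"
proof -
  have "(A *v x) \<bullet> (A *v x) = (\<Sum>i\<in>UNIV. (A *v x)$i * (A *v x)$i)" by (simp add: inner_vec_def)
  also have "\<dots> = (\<Sum>i\<in>UNIV. ((A$i) \<bullet> x)\<^sup>2)" by (simp only: mv_component power2_eq_square)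
  finally show ?thesis .
qed

lemma fro2_bessel:
  fixes A :: "real^'n^'m"
  assumes "orthonormal S"
  shows "(\<Sum>e\<in>S. (A *v e) \<bullet> (A *v e)) \<le> fro2 A"
proof -
  have "(\<Sum>e\<in>S. (A *v e) \<bullet> (A *v e)) = (\<Sum>i\<in>UNIV. \<Sum>e\<in>S. ((A$i) \<bullet> e)\<^sup>2)"
    unfolding norm_mv_sq by (rule sum.swap)
  also have "\<dots> \<le> (\<Sum>i\<in>UNIV. (A$i) \<bullet> (A$i))"
    by (intro sum_mono orthonormal_bessel assms)
  finally show ?thesis by (simp add: fro2_def)
qed

lemma fro2_parseval:
  fixes A :: "real^'n^'m"
  assumes "orthonormal S" "\<And>i. A$i \<in> span S"
  shows "(\<Sum>e\<in>S. (A *v e) \<bullet> (A *v e)) = fro2 A"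
proof -
  have "(\<Sum>e\<in>S. (A *v e) \<bullet> (A *v e)) = (\<Sum>i\<in>UNIV. \<Sum>e\<in>S. ((A$i) \<bullet> e)\<^sup>2)"
    unfolding norm_mv_sq by (rule sum.swap)
  also have "\<dots> = (\<Sum>i\<in>UNIV. (A$i) \<bullet> (A$i))"
  proof (rule sum.cong[OF refl])
    fix i
    show "(\<Sum>e\<in>S. ((A$i) \<bullet> e)\<^sup>2) = (A$i) \<bullet> (A$i)"
      using orthonormal_parseval[OF assms(1) assms(2)[of i], of "A$i"]
      by (simp add: power2_eq_square inner_commute)
  qed
  finally show ?thesis by (simp add: fro2_def)
qed

lemma matrix_sub_ldistrib: "(A::real^'n^'m) ** (B - C) = A ** B - A ** C"
  by (vector matrix_matrix_mult_def sum_subtractf right_diff_distrib)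

lemma matrix_sub_rdistrib: "((A::real^'n^'m) - B) ** C = A ** C - B ** C"
  by (vector matrix_matrix_mult_def sum_subtractf left_diff_distrib)

lemma matrix_add_rdistrib: "((A::real^'n^'m) + B) ** C = A ** C + B ** C"
  by (vector matrix_matrix_mult_def sum.distrib distrib_right)

lemma transpose_sub: "transpose ((A::real^'n^'m) - B) = transpose A - transpose B"
  by (simp add: transpose_def vec_eq_iff)

lemma transpose_uminus: "transpose (- (A::real^'n^'m)) = - transpose A"
  by (simp add: transpose_def vec_eq_iff)

lemma mm_row: "((T::real^'n^'m) ** P) $ i = transpose P *v (T $ i)"
  by (simp add: matrix_matrix_mult_def matrix_vector_mult_def transpose_def vec_eq_iff mult.commute)

lemma proj_pyth:
  fixes P :: "real^'n^'n"
  assumes sym: "transpose P = P" and idem: "P ** P = P"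
  shows "y \<bullet> y = (P *v y) \<bullet> (P *v y) + ((mat 1 - P) *v y) \<bullet> ((mat 1 - P) *v y)"
proof -
  have "y \<bullet> (P *v y) = (P *v y) \<bullet> (P *v y)"
  proof -
    have "y \<bullet> (P *v y) = y \<bullet> (P *v (P *v y))" by (simp add: matrix_vector_mul_assoc idem)
    also have "\<dots> = (P *v y) \<bullet> (P *v y)" using sym_adj[OF sym, of y "P *v y"] by simp
    finally show ?thesis .
  qed
  moreover have "(mat 1 - P) *v y = y - P *v y" by (simp add: matrix_vector_mult_diff_rdistrib)
  ultimately show ?thesis by (simp add: inner_diff_left inner_diff_right inner_commute)
qed

lemma fro2_split_right:
  fixes P :: "real^'n^'n" and T :: "real^'n^'m"
  assumes sym: "transpose P = P" and idem: "P ** P = P"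
  shows "fro2 T = fro2 (T ** P) + fro2 (T ** (mat 1 - P))"
proof -
  have "transpose (mat 1 - P) = mat 1 - P" using sym by (simp add: transpose_sub)
  then show ?thesis
    unfolding fro2_def mm_row using sym
    by (simp add: proj_pyth[OF sym idem, symmetric] sum.distrib[symmetric])
qed

lemma fro2_split_left:
  fixes P :: "real^'n^'n" and T :: "real^'m^'n"
  assumes sym: "transpose P = P" and idem: "P ** P = P"
  shows "fro2 T = fro2 (P ** T) + fro2 ((mat 1 - P) ** T)"
proof -
  have "transpose (mat 1 - P) = mat 1 - P" using sym by (simp add: transpose_sub)
  then have "fro2 (transpose T) = fro2 (transpose T ** P) + fro2 (transpose T ** (mat 1 - P))"
    using fro2_split_right[OF sym idem] by blast
  then show ?thesis
    by (metis fro2_transpose matrix_transpose_mul sym \<open>transpose (mat 1 - P) = mat 1 - P\<close>)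
qed

lemma fro2_gram: "fro2 ((A::real^'n^'m) ** transpose A) = fro2 (transpose A ** A)"
proof -
  have "fro2 (A ** transpose A) = trace ((A ** transpose A) ** (A ** transpose A))"
    by (metis trace_fro2 matrix_transpose_mul transpose_transpose)
  also have "\<dots> = trace (A ** (transpose A ** A ** transpose A))" by (simp add: matrix_mul_assoc)
  also have "\<dots> = trace ((transpose A ** A ** transpose A) ** A)" by (rule trace_mul_sym)
  also have "\<dots> = trace ((transpose A ** A) ** (transpose A ** A))" by (simp add: matrix_mul_assoc)
  also have "\<dots> = fro2 (transpose A ** A)"
    by (metis trace_fro2 matrix_transpose_mul transpose_transpose)
  finally show ?thesis .
qed


lemma orthonormal_coeff:
  fixes U :: "'a::euclidean_space set"
  assumes "orthonormal U" "u \<in> U"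
  shows "u \<bullet> (\<Sum>v\<in>U. a v *\<^sub>R v) = a u"
proof -
  have fin: "finite U" using orthonormal_finite[OF assms(1)] .
  have "u \<bullet> (\<Sum>v\<in>U. a v *\<^sub>R v) = (\<Sum>v\<in>U. a v * (u \<bullet> v))" by (simp add: inner_sum_right)
  also have "\<dots> = (\<Sum>v\<in>U. if v = u then a u else 0)"
    by (rule sum.cong) (use assms in \<open>auto simp: orthonormal_def\<close>)
  also have "\<dots> = a u" using fin assms(2) by simp
  finally show ?thesis .
qed

lemma vec_eq_by_inner:
  assumes "\<And>y. (a::real^'n) \<bullet> y = b \<bullet> y" shows "a = b"
proof -
  have "(a - b) \<bullet> (a - b) = 0" using assms[of "a - b"] by (simp add: inner_diff_left)
  then show ?thesis by simp
qed

lemma sym_by_inner: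
  fixes M :: "real^'n^'n"
  assumes "\<And>x y. (M *v x) \<bullet> y = x \<bullet> (M *v y)"
  shows "transpose M = M"
proof -
  have "transpose M *v x = M *v x" for x
  proof (rule vec_eq_by_inner)
    fix y
    have "(transpose M *v x) \<bullet> y = x \<bullet> (M *v y)" by (rule adj)
    also have "\<dots> = (M *v x) \<bullet> y" by (rule assms[symmetric])
    finally show "(transpose M *v x) \<bullet> y = (M *v x) \<bullet> y" .
  qed
  then show ?thesis by (simp add: matrix_eq)
qed

lemma gram_sym: "transpose (transpose X ** X) = transpose X ** (X::real^'r^'n)"
  by (simp add: matrix_transpose_mul)

lemma gram_inner: "x \<bullet> ((transpose X ** X) *v y) = (X *v x) \<bullet> ((X::real^'r^'n) *v y)"
proof -
  have "x \<bullet> ((transpose X ** X) *v y) = x \<bullet> (transpose X *v (X *v y))" by (simp add: matrix_vector_mul_assoc)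
  also have "\<dots> = (X *v x) \<bullet> (X *v y)" using adj[of "transpose X" x "X *v y"] by simp
  finally show ?thesis .
qed

lemma gram_basis:
  fixes X :: "real^'r^'n"
  obtains U where "orthonormal U" "span U = UNIV"
    "\<And>u. u \<in> U \<Longrightarrow> (transpose X ** X) *v u = (u \<bullet> ((transpose X ** X) *v u)) *\<^sub>R u"
  using spectral_subspace[OF gram_sym[of X], of UNIV] by auto

lemma eig_set:
  fixes G :: "real^'n^'n"
  assumes sym: "transpose G = G" and U: "orthonormal U" "span U = UNIV"
    and eig: "\<And>u. u \<in> U \<Longrightarrow> G *v u = (u \<bullet> (G *v u)) *\<^sub>R u"
  shows "{c. \<exists>v. v \<noteq> 0 \<and> G *v v = c *\<^sub>R v} = (\<lambda>u. u \<bullet> (G *v u)) ` U"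
proof
  show "(\<lambda>u. u \<bullet> (G *v u)) ` U \<subseteq> {c. \<exists>v. v \<noteq> 0 \<and> G *v v = c *\<^sub>R v}"
  proof
    fix c assume "c \<in> (\<lambda>u. u \<bullet> (G *v u)) ` U"
    then obtain u where u: "u \<in> U" "c = u \<bullet> (G *v u)" by blast
    have "u \<noteq> 0" using U(1) u(1) by (auto simp: orthonormal_def)
    then show "c \<in> {c. \<exists>v. v \<noteq> 0 \<and> G *v v = c *\<^sub>R v}" using eig[OF u(1)] u(2) by auto
  qed
  show "{c. \<exists>v. v \<noteq> 0 \<and> G *v v = c *\<^sub>R v} \<subseteq> (\<lambda>u. u \<bullet> (G *v u)) ` U"
  proof
    fix c assume "c \<in> {c. \<exists>v. v \<noteq> 0 \<and> G *v v = c *\<^sub>R v}"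
    then obtain v where v: "v \<noteq> 0" "G *v v = c *\<^sub>R v" by blast
    have "\<exists>u\<in>U. v \<bullet> u \<noteq> 0"
    proof (rule ccontr)
      assume "\<not> ?thesis"
      then have z: "\<forall>e\<in>U. v \<bullet> e = 0" by blast
      have "v = (\<Sum>e\<in>U. (v \<bullet> e) *\<^sub>R e)"
        using U(2) by (intro orthonormal_expand[OF U(1)]) auto
      also have "\<dots> = 0" using z by simp
      finally show False using v(1) by simp
    qed
    then obtain u where u: "u \<in> U" "v \<bullet> u \<noteq> 0" by blast
    have "c * (v \<bullet> u) = (G *v v) \<bullet> u" using v(2) by simp
    also have "\<dots> = v \<bullet> (G *v u)" by (rule sym_adj[OF sym])
    also have "\<dots> = (u \<bullet> (G *v u)) * (v \<bullet> u)" by (subst eig[OF u(1)]) simp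
    finally have "c = u \<bullet> (G *v u)" using u(2) by simp
    then show "c \<in> (\<lambda>u. u \<bullet> (G *v u)) ` U" using u(1) by blast
  qed
qed

lemma gram_bounds:
  fixes X :: "real^'r^'n"
  defines "s \<equiv> min_eigenvalue (transpose X ** X)"
  shows "s \<ge> 0" "\<And>x. (X *v x) \<bullet> (X *v x) \<ge> s * (x \<bullet> x)"
    "\<And>x. ((transpose X ** X) *v x) \<bullet> ((transpose X ** X) *v x) \<ge> s * ((X *v x) \<bullet> (X *v x))"
proof -
  define G where "G = transpose X ** X"
  obtain U where U: "orthonormal U" "span U = UNIV"
    and eig: "\<And>u. u \<in> U \<Longrightarrow> G *v u = (u \<bullet> (G *v u)) *\<^sub>R u"
    using gram_basis[of X] unfolding G_def by blast
  have sym: "transpose G = G" unfolding G_def by (rule gram_sym)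
  define lam where "lam u = u \<bullet> (G *v u)" for u
  have fin: "finite U" by (rule orthonormal_finite[OF U(1)])
  have ne: "U \<noteq> {}"
  proof
    assume "U = {}"
    then have "span U = {0}" by simp
    then have "axis undefined 1 = (0::real^'r)" using U(2) by (metis UNIV_I singletonD)
    then have "(axis undefined 1 :: real^'r) $ undefined = 0" by simp
    then show False by simp
  qed
  have Ev: "{c. \<exists>v. v \<noteq> 0 \<and> G *v v = c *\<^sub>R v} = lam ` U"
    unfolding lam_def by (rule eig_set[OF sym U eig])
  have s_def': "s = Min (lam ` U)" unfolding s_def min_eigenvalue_def G_def[symmetric] Ev ..
  have lam_nn: "lam u \<ge> 0" for u unfolding lam_def G_def gram_inner by simp
  have s_le: "s \<le> lam u" if "u \<in> U" for u using fin that unfolding s_def' by simp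
  have "s \<in> lam ` U" unfolding s_def' using fin ne by simp
  then show s_nn: "s \<ge> 0" using lam_nn by auto
  have Gu: "u \<bullet> (G *v x) = lam u * (u \<bullet> x)" if "u \<in> U" for u x
  proof -
    have "u \<bullet> (G *v x) = (G *v u) \<bullet> x" using sym_adj[OF sym, of u x] by simp
    also have "\<dots> = lam u * (u \<bullet> x)" by (subst eig[OF that]) (simp add: lam_def)
    finally show ?thesis .
  qed
  have xx: "x \<bullet> y = (\<Sum>u\<in>U. (x \<bullet> u) * (u \<bullet> y))" for x y
    using U(2) by (intro orthonormal_parseval[OF U(1)]) auto
  fix x
  have xx2: "x \<bullet> x = (\<Sum>u\<in>U. (u \<bullet> x)\<^sup>2)"
  proof -
    have "x \<bullet> x = (\<Sum>u\<in>U. (x \<bullet> u) * (u \<bullet> x))" by (rule xx)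
    also have "\<dots> = (\<Sum>u\<in>U. (u \<bullet> x)\<^sup>2)" by (simp add: power2_eq_square inner_commute)
    finally show ?thesis .
  qed
  have exp1: "x \<bullet> (G *v x) = (\<Sum>u\<in>U. lam u * (u \<bullet> x)\<^sup>2)"
  proof -
    have "x \<bullet> (G *v x) = (\<Sum>u\<in>U. (x \<bullet> u) * (u \<bullet> (G *v x)))" by (rule xx)
    also have "\<dots> = (\<Sum>u\<in>U. lam u * (u \<bullet> x)\<^sup>2)"
      by (rule sum.cong[OF refl]) (simp add: Gu power2_eq_square inner_commute[of x] mult_ac)
    finally show ?thesis .
  qed
  have exp2: "(G *v x) \<bullet> (G *v x) = (\<Sum>u\<in>U. (lam u)\<^sup>2 * (u \<bullet> x)\<^sup>2)"
  proof -
    have "(G *v x) \<bullet> (G *v x) = (\<Sum>u\<in>U. ((G *v x) \<bullet> u) * (u \<bullet> (G *v x)))" by (rule xx)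
    also have "\<dots> = (\<Sum>u\<in>U. (lam u)\<^sup>2 * (u \<bullet> x)\<^sup>2)"
      by (rule sum.cong[OF refl]) (simp add: Gu power2_eq_square inner_commute[of "G *v x"] mult_ac)
    finally show ?thesis .
  qed
  have XG: "(X *v x) \<bullet> (X *v x) = x \<bullet> (G *v x)" unfolding G_def gram_inner ..
  have "s * (x \<bullet> x) = (\<Sum>u\<in>U. s * (u \<bullet> x)\<^sup>2)" by (simp add: xx2 sum_distrib_left)
  also have "\<dots> \<le> (\<Sum>u\<in>U. lam u * (u \<bullet> x)\<^sup>2)"
    by (intro sum_mono mult_right_mono s_le) auto
  finally show "(X *v x) \<bullet> (X *v x) \<ge> s * (x \<bullet> x)" using XG exp1 by simp
  have "s * ((X *v x) \<bullet> (X *v x)) = (\<Sum>u\<in>U. s * (lam u * (u \<bullet> x)\<^sup>2))"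
    by (simp add: XG exp1 sum_distrib_left)
  also have "\<dots> \<le> (\<Sum>u\<in>U. (lam u)\<^sup>2 * (u \<bullet> x)\<^sup>2)"
  proof (rule sum_mono)
    fix u assume u: "u \<in> U"
    have "s * lam u \<le> lam u * lam u" using s_le[OF u] lam_nn[of u] by (intro mult_right_mono) auto
    then have "(s * lam u) * (u \<bullet> x)\<^sup>2 \<le> (lam u * lam u) * (u \<bullet> x)\<^sup>2"
      by (rule mult_right_mono) simp
    then show "s * (lam u * (u \<bullet> x)\<^sup>2) \<le> (lam u)\<^sup>2 * (u \<bullet> x)\<^sup>2"
      by (simp add: power2_eq_square mult.assoc)
  qed
  finally show "((transpose X ** X) *v x) \<bullet> ((transpose X ** X) *v x) \<ge> s * ((X *v x) \<bullet> (X *v x))"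
    using exp2 unfolding G_def by simp
qed


definition penrose :: "real^'r^'n \<Rightarrow> real^'n^'r \<Rightarrow> bool" where
  "penrose A B \<longleftrightarrow> A ** B ** A = A \<and> B ** A ** B = B \<and>
                    transpose (A ** B) = A ** B \<and> transpose (B ** A) = B ** A"

lemma penrose_unique:
  assumes "penrose X B" "penrose X C" shows "B = C"
proof -
  from assms have b1: "X ** B ** X = X" and b2: "B ** X ** B = B" and b3: "transpose (X ** B) = X ** B"
    and b4: "transpose (B ** X) = B ** X" and c1: "X ** C ** X = X" and c2: "C ** X ** C = C"
    and c3: "transpose (X ** C) = X ** C" and c4: "transpose (C ** X) = C ** X"
    by (auto simp: penrose_def)
  have XT1: "transpose X = transpose X ** (X ** C)"
  proof -
    have "transpose X = transpose (X ** C ** X)" using c1 by simp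
    also have "\<dots> = transpose X ** transpose (X ** C)" by (simp add: matrix_transpose_mul matrix_mul_assoc)
    finally show ?thesis using c3 by simp
  qed
  have XT2: "transpose X = (B ** X) ** transpose X"
  proof -
    have "transpose X = transpose (X ** (B ** X))" using b1 by (simp add: matrix_mul_assoc)
    also have "\<dots> = transpose (B ** X) ** transpose X" by (simp add: matrix_transpose_mul)
    finally show ?thesis using b4 by simp
  qed
  have B1: "B = B ** transpose B ** transpose X"
  proof -
    have "B = B ** (X ** B)" using b2 by (simp add: matrix_mul_assoc)
    also have "\<dots> = B ** transpose (X ** B)" using b3 by simp
    finally show ?thesis by (simp add: matrix_transpose_mul matrix_mul_assoc)
  qed
  have "B = B ** X ** C"
  proof -
    have "B = B ** transpose B ** (transpose X ** (X ** C))" using B1 XT1 by metis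
    also have "\<dots> = (B ** transpose B ** transpose X) ** X ** C" by (simp add: matrix_mul_assoc)
    finally show ?thesis using B1 by metis
  qed
  moreover have "C = B ** X ** C"
  proof -
    have "C = (C ** X) ** C" using c2 by simp
    also have "\<dots> = transpose (C ** X) ** C" using c4 by simp
    also have "\<dots> = transpose X ** transpose C ** C" by (simp add: matrix_transpose_mul)
    also have "\<dots> = (B ** X) ** (transpose X ** transpose C) ** C" using XT2
      by (metis matrix_mul_assoc)
    also have "\<dots> = (B ** X) ** (transpose (C ** X) ** C)" by (simp add: matrix_transpose_mul matrix_mul_assoc)
    also have "\<dots> = (B ** X) ** (C ** X ** C)" using c4 by simp
    also have "\<dots> = B ** X ** C" using c2 by simp
    finally show ?thesis .
  qed
  ultimately show ?thesis by simp
qed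

lemma penrose_exists: "\<exists>B. penrose (X::real^'r^'n) B"
proof -
  define G where "G = transpose X ** X"
  obtain U where U: "orthonormal U" "span U = UNIV"
    and eig: "\<And>u. u \<in> U \<Longrightarrow> G *v u = (u \<bullet> (G *v u)) *\<^sub>R u"
    using gram_basis[of X] unfolding G_def by blast
  have sym: "transpose G = G" unfolding G_def by (rule gram_sym)
  have fin: "finite U" by (rule orthonormal_finite[OF U(1)])
  define lam where "lam u = u \<bullet> (G *v u)" for u
  define c where "c u = (if lam u > 0 then 1 / lam u else 0)" for u
  define B :: "real^'n^'r" where "B = (\<chi> i j. \<Sum>u\<in>U. c u * u$i * (X *v u)$j)"
  have Bv: "B *v y = (\<Sum>u\<in>U. (c u * ((X *v u) \<bullet> y)) *\<^sub>R u)" for y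
  proof -
    have "(B *v y) $ i = (\<Sum>u\<in>U. (c u * ((X *v u) \<bullet> y)) *\<^sub>R u) $ i" for i
    proof -
      have "(B *v y) $ i = (\<Sum>j\<in>UNIV. \<Sum>u\<in>U. c u * u$i * (X *v u)$j * y$j)"
        by (simp add: B_def matrix_vector_mult_def sum_distrib_right)
      also have "\<dots> = (\<Sum>u\<in>U. \<Sum>j\<in>UNIV. c u * u$i * (X *v u)$j * y$j)" by (rule sum.swap)
      also have "\<dots> = (\<Sum>u\<in>U. (c u * ((X *v u) \<bullet> y)) * u$i)"
        by (simp add: inner_vec_def sum_distrib_left sum_distrib_right mult_ac)
      finally show ?thesis by simp
    qed
    then show ?thesis by (simp add: vec_eq_iff)
  qed
  have XuXx: "(X *v u) \<bullet> (X *v x) = lam u * (u \<bullet> x)" if "u \<in> U" for u x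
  proof -
    have "(X *v u) \<bullet> (X *v x) = u \<bullet> (G *v x)" unfolding G_def gram_inner ..
    also have "\<dots> = (G *v u) \<bullet> x" using sym_adj[OF sym, of u x] by simp
    also have "\<dots> = lam u * (u \<bullet> x)" by (subst eig[OF that]) (simp add: lam_def)
    finally show ?thesis .
  qed
  have lam_nn: "lam u \<ge> 0" for u unfolding lam_def G_def gram_inner by simp
  have Xu0: "X *v u = 0" if "u \<in> U" "\<not> lam u > 0" for u
  proof -
    have "(X *v u) \<bullet> (X *v u) = lam u" using XuXx[OF that(1), of u] U(1) that(1)
      by (simp add: orthonormal_def)
    then show ?thesis using that(2) lam_nn[of u] by simp
  qed
  have BX: "B *v (X *v x) = (\<Sum>u\<in>U. (if lam u > 0 then u \<bullet> x else 0) *\<^sub>R u)" for x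
    unfolding Bv by (rule sum.cong) (auto simp: XuXx c_def)
  have xexp: "x = (\<Sum>u\<in>U. (x \<bullet> u) *\<^sub>R u)" for x
    using U(2) by (intro orthonormal_expand[OF U(1)]) auto
  have p1: "X ** B ** X = X"
  proof -
    have "X *v (B *v (X *v x)) = X *v x" for x
    proof -
      have "X *v (B *v (X *v x)) = (\<Sum>u\<in>U. (if lam u > 0 then u \<bullet> x else 0) *\<^sub>R (X *v u))"
        by (simp add: BX mv_sum[OF fin] matrix_vector_mult_scaleR)
      also have "\<dots> = (\<Sum>u\<in>U. (x \<bullet> u) *\<^sub>R (X *v u))"
        by (rule sum.cong) (auto simp: Xu0 inner_commute)
      also have "\<dots> = X *v x" by (subst (2) xexp) (simp add: mv_sum[OF fin] matrix_vector_mult_scaleR)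
      finally show ?thesis .
    qed
    then show ?thesis by (simp add: matrix_eq matrix_vector_mul_assoc matrix_mul_assoc)
  qed
  have p2: "B ** X ** B = B"
  proof -
    have "B *v (X *v (B *v y)) = B *v y" for y
    proof -
      have "B *v (X *v (B *v y)) = (\<Sum>u\<in>U. (if lam u > 0 then u \<bullet> (B *v y) else 0) *\<^sub>R u)" by (rule BX)
      also have "\<dots> = (\<Sum>u\<in>U. (c u * ((X *v u) \<bullet> y)) *\<^sub>R u)"
      proof (rule sum.cong[OF refl])
        fix u assume u: "u \<in> U"
        have "u \<bullet> (B *v y) = c u * ((X *v u) \<bullet> y)" unfolding Bv by (rule orthonormal_coeff[OF U(1) u])
        then show "(if lam u > 0 then u \<bullet> (B *v y) else 0) *\<^sub>R u = (c u * ((X *v u) \<bullet> y)) *\<^sub>R u"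
          by (simp add: c_def)
      qed
      also have "\<dots> = B *v y" by (simp add: Bv)
      finally show ?thesis .
    qed
    then show ?thesis by (simp add: matrix_eq matrix_vector_mul_assoc matrix_mul_assoc)
  qed
  have p3: "transpose (X ** B) = X ** B"
  proof (rule sym_by_inner)
    fix x y
    have e: "((X ** B) *v x) \<bullet> y = (\<Sum>u\<in>U. c u * ((X *v u) \<bullet> x) * ((X *v u) \<bullet> y))" for x y
    proof -
      have "((X ** B) *v x) \<bullet> y = (B *v x) \<bullet> (transpose X *v y)"
        using adj[of "transpose X" "B *v x" y] by (simp add: matrix_vector_mul_assoc)
      also have "\<dots> = (\<Sum>u\<in>U. c u * ((X *v u) \<bullet> x) * (u \<bullet> (transpose X *v y)))"
        by (simp add: Bv inner_sum_left mult_ac)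
      also have "\<dots> = (\<Sum>u\<in>U. c u * ((X *v u) \<bullet> x) * ((X *v u) \<bullet> y))"
        using adj[of "transpose X"] by (simp add: inner_commute)
      finally show ?thesis .
    qed
    show "((X ** B) *v x) \<bullet> y = x \<bullet> ((X ** B) *v y)"
      by (simp add: e[of x y] e[of y x] inner_commute[of x] mult_ac)
  qed
  have p4: "transpose (B ** X) = B ** X"
  proof (rule sym_by_inner)
    fix x y
    have e: "((B ** X) *v x) \<bullet> y = (\<Sum>u\<in>U. (if lam u > 0 then (u \<bullet> x) * (u \<bullet> y) else 0))" for x y
    proof -
      have "((B ** X) *v x) \<bullet> y = (\<Sum>u\<in>U. (if lam u > 0 then u \<bullet> x else 0) *\<^sub>R u) \<bullet> y"
        by (simp only: matrix_vector_mul_assoc[symmetric] BX)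
      also have "\<dots> = (\<Sum>u\<in>U. ((if lam u > 0 then u \<bullet> x else 0) *\<^sub>R u) \<bullet> y)"
        by (rule inner_sum_left)
      also have "\<dots> = (\<Sum>u\<in>U. (if lam u > 0 then (u \<bullet> x) * (u \<bullet> y) else 0))"
        by (rule sum.cong) auto
      finally show ?thesis .
    qed
    show "((B ** X) *v x) \<bullet> y = x \<bullet> ((B ** X) *v y)"
      unfolding inner_commute[of x] e by (rule sum.cong) (auto simp: mult.commute)
  qed
  show ?thesis using p1 p2 p3 p4 by (auto simp: penrose_def)
qed

lemma pinv_penrose: "penrose X (pinv X)"
proof -
  have "\<exists>!B. penrose X B" using penrose_exists penrose_unique by blast
  then have "penrose X (THE B. penrose X B)" by (rule theI')
  then show ?thesis by (simp add: pinv_def penrose_def)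
qed



declare transpose_matrix_vector [simp del]

lemma decomp:
  fixes X Z :: "real^'r^'n" and P :: "real^'n^'n"
  assumes Psym: "transpose P = P" and Pidem: "P ** P = P" and PX: "P ** X = X"
  defines "Z1 \<equiv> P ** Z" and "Zp \<equiv> (mat 1 - P) ** Z"
  shows "fro2 (X ** transpose X - Z ** transpose Z) =
         fro2 (X ** transpose X - Z1 ** transpose Z1) + 2 * fro2 (Z1 ** transpose Zp) + fro2 (Zp ** transpose Zp)"
proof -
  define Q where "Q = mat 1 - P"
  define A where "A = X ** transpose X"
  define M where "M = Z ** transpose Z"
  define Y where "Y = A - M"
  have Qsym: "transpose Q = Q" using Psym by (simp add: Q_def transpose_sub)
  have XP: "transpose X ** P = transpose X"
    by (metis PX Psym matrix_transpose_mul)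
  have PA: "P ** A = A" by (simp add: A_def matrix_mul_assoc PX)
  have AP: "A ** P = A" by (simp add: A_def matrix_mul_assoc[symmetric] XP)
  have QA: "Q ** A = 0" by (simp add: Q_def matrix_sub_rdistrib PA)
  have AQ: "A ** Q = 0" by (simp add: Q_def matrix_sub_ldistrib AP)
  have Z1T': "transpose (P ** Z) = transpose Z ** P" by (simp add: matrix_transpose_mul Psym)
  have ZpT': "transpose (Q ** Z) = transpose Z ** Q" by (simp add: matrix_transpose_mul Qsym)
  have Z1T: "transpose Z1 = transpose Z ** P" by (simp add: Z1_def Z1T')
  have ZpT: "transpose Zp = transpose Z ** Q" by (simp add: Zp_def Q_def[symmetric] ZpT')
  have e1: "P ** Y ** P = A - Z1 ** transpose Z1"
    by (simp add: Y_def matrix_sub_ldistrib matrix_sub_rdistrib PA AP Z1T M_def Z1_def Z1T' matrix_mul_assoc)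
  have e2: "P ** Y ** Q = - (Z1 ** transpose Zp)"
  proof -
    have "P ** Y ** Q = P ** A ** Q - P ** M ** Q" by (simp add: Y_def matrix_sub_ldistrib matrix_sub_rdistrib)
    also have "P ** A ** Q = 0" by (simp add: PA AQ)
    also have "P ** M ** Q = Z1 ** transpose Zp" by (simp add: M_def Z1_def ZpT Zp_def Q_def[symmetric] ZpT' matrix_mul_assoc)
    finally show ?thesis by simp
  qed
  have e3: "Q ** Y ** P = - (Zp ** transpose Z1)"
  proof -
    have "Q ** Y ** P = Q ** A ** P - Q ** M ** P" by (simp add: Y_def matrix_sub_ldistrib matrix_sub_rdistrib)
    also have "Q ** A ** P = 0" by (simp add: QA)
    also have "Q ** M ** P = Zp ** transpose Z1" by (simp add: M_def Zp_def Q_def[symmetric] Z1T Z1_def Z1T' matrix_mul_assoc)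
    finally show ?thesis by simp
  qed
  have e4: "Q ** Y ** Q = - (Zp ** transpose Zp)"
  proof -
    have "Q ** Y ** Q = Q ** A ** Q - Q ** M ** Q" by (simp add: Y_def matrix_sub_ldistrib matrix_sub_rdistrib)
    also have "Q ** A ** Q = 0" by (simp add: QA)
    also have "Q ** M ** Q = Zp ** transpose Zp" by (simp add: M_def Zp_def Q_def[symmetric] ZpT' matrix_mul_assoc)
    finally show ?thesis by simp
  qed
  have K: "fro2 (Zp ** transpose Z1) = fro2 (Z1 ** transpose Zp)"
    by (metis fro2_transpose matrix_transpose_mul transpose_transpose)
  have "fro2 Y = fro2 (P ** Y) + fro2 (Q ** Y)" unfolding Q_def by (rule fro2_split_left[OF Psym Pidem])
  also have "fro2 (P ** Y) = fro2 (P ** Y ** P) + fro2 (P ** Y ** Q)"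
    unfolding Q_def by (rule fro2_split_right[OF Psym Pidem])
  also have "fro2 (Q ** Y) = fro2 (Q ** Y ** P) + fro2 (Q ** Y ** Q)"
    unfolding Q_def by (rule fro2_split_right[OF Psym Pidem])
  finally show ?thesis
    unfolding e1 e2 e3 e4 fro2_uminus K by (simp add: Y_def A_def M_def)
qed



lemma g_bound:
  fixes a s w dd c :: real
  assumes "a \<ge> s" "s \<ge> 0" "w \<ge> 0" "dd \<ge> 0" "0 \<le> c" "c \<le> 1"
  shows "2*c* s*dd - c\<^sup>2*dd\<^sup>2 \<le> (a - w)\<^sup>2 + 2*w*dd"
proof -
  have eq: "(a - w)\<^sup>2 + 2*w*dd - (2*c * s*dd - c\<^sup>2*dd\<^sup>2) = (a - w - c*dd)\<^sup>2 + 2*c*dd*(a - s) + 2*w*dd*(1 - c)"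
    by (simp add: power2_eq_square algebra_simps)
  have "0 \<le> 2*c*dd*(a - s)" using assms by simp
  moreover have "0 \<le> 2*w*dd*(1 - c)" using assms by simp
  moreover have "0 \<le> (a - w - c*dd)\<^sup>2" by simp
  ultimately show ?thesis using eq by linarith
qed

lemma phi_le:
  fixes s dd c :: real
  shows "2*c* s*dd - c\<^sup>2*dd\<^sup>2 \<le> s\<^sup>2"
proof -
  have "0 \<le> (s - c*dd)\<^sup>2" by simp
  then show ?thesis by (simp add: power2_eq_square algebra_simps)
qed

lemma final_scalar:
  fixes s t F E r q :: real
  assumes s: "s \<ge> 0" and t: "t > 0" and F: "F > 0" and q: "q \<ge> 1" and rq: "r \<ge> q"
    and tq: "t\<^sup>2 \<le> q * F"
    and key: "\<And>c. 0 \<le> c \<Longrightarrow> c \<le> 1 \<Longrightarrow> (r - q) * s\<^sup>2 + 2*c* s*t - c\<^sup>2*F \<le> E"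
  shows "s*t \<le> F \<Longrightarrow> (r/q) * ((s*t)\<^sup>2 / F) \<le> E"
    and "s*t \<ge> F \<Longrightarrow> (r/q) * F \<le> E"
proof -
  have qpos: "q > 0" using q by simp
  have comb: "(r/q) * L \<le> E" if L1: "L \<le> q * s\<^sup>2" and L2: "(r - q) * s\<^sup>2 + L \<le> E" and L0: "L \<ge> 0" for L
  proof -
    have "(r - q) * L \<le> (r - q) * (q * s\<^sup>2)" using rq L1 by (intro mult_left_mono) auto
    then have "r * L \<le> q * ((r - q) * s\<^sup>2 + L)" by (simp add: algebra_simps)
    also have "\<dots> \<le> q * E" using L2 qpos by simp
    finally have "r * L \<le> q * E" .
    then show ?thesis using qpos by (simp add: field_simps)
  qed
  {
    assume st: "s*t \<le> F"
    define c where "c = s*t/F"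
    have c0: "0 \<le> c" using s t F by (simp add: c_def)
    have c1: "c \<le> 1" using st F by (simp add: c_def)
    have "2*c* s*t - c\<^sup>2*F = (s*t)\<^sup>2 / F" using F by (simp add: c_def power2_eq_square field_simps)
    then have L2: "(r - q) * s\<^sup>2 + (s*t)\<^sup>2 / F \<le> E" using key[OF c0 c1] by simp
    have "(s*t)\<^sup>2 / F = s\<^sup>2 * (t\<^sup>2 / F)" by (simp add: power_mult_distrib)
    also have "\<dots> \<le> s\<^sup>2 * q" using tq F by (intro mult_left_mono) (auto simp: divide_le_eq)
    finally have "(s*t)\<^sup>2 / F \<le> s\<^sup>2 * q" .
    then have L1: "(s*t)\<^sup>2 / F \<le> q * s\<^sup>2" by (simp add: mult.commute)
    show "(r/q) * ((s*t)\<^sup>2 / F) \<le> E" using comb[OF L1 L2] F by simp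
  }
  {
    assume st: "s*t \<ge> F"
    have L2: "(r - q) * s\<^sup>2 + F \<le> E" using key[of 1] st by simp
    have "t\<^sup>2 \<le> q * (s*t)" using tq st qpos by (meson mult_left_mono less_imp_le order_trans)
    then have "t \<le> q * s" using t by (simp add: power2_eq_square mult_ac)
    then have "s*t \<le> s*(q* s)" using s by (intro mult_left_mono)
    then have L1: "F \<le> q * s\<^sup>2" using st by (simp add: power2_eq_square mult_ac)
    show "(r/q) * F \<le> E" using comb[OF L1 L2] F by simp
  }
qed


declare transpose_matrix_vector [simp del]

lemma subspace_range_mv: "subspace (range (\<lambda>x. (A::real^'n^'m) *v x))"
  unfolding subspace_def
  by (auto simp: matrix_vector_right_distrib[symmetric] matrix_vector_mult_scaleR[symmetric]
      intro: range_eqI[of _ _ 0] range_eqI)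

lemma adjT: "x \<bullet> (A *v (transpose A *v x)) = (transpose A *v x) \<bullet> (transpose (A::real^'n^'m) *v x)"
  using adj[of A x "transpose A *v x"] by simp

lemma transpose_axis: "transpose (A::real^'n^'m) *v axis i 1 = A $ i"
  by (simp add: vec_eq_iff matrix_vector_mult_def transpose_def axis_def if_distrib cong: if_cong)

lemma core:
  fixes X Z :: "real^'r^'n"
  defines "P \<equiv> X ** pinv X"
  defines "Zp \<equiv> (mat 1 - P) ** Z" and "s \<equiv> min_eigenvalue (transpose X ** X)"
  assumes spos: "s > 0" and c0: "0 \<le> c" and c1: "c \<le> 1"
  shows "(real CARD('r) - real (rank Z)) * s\<^sup>2 + 2*c * s * fro2 Zp - c\<^sup>2 * fro2 (Zp ** transpose Zp)
           \<le> fro2 (X ** transpose X - Z ** transpose Z) - fro2 (Zp ** transpose Zp)"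
    and "(fro2 Zp)\<^sup>2 \<le> real (rank Z) * fro2 (Zp ** transpose Zp)"
proof -
  define B where "B = pinv X"
  have pen: "penrose X B" unfolding B_def by (rule pinv_penrose)
  have Psym: "transpose P = P" using pen by (simp add: penrose_def P_def B_def)
  have PX: "P ** X = X" using pen by (simp add: penrose_def P_def B_def)
  have Pidem: "P ** P = P" by (metis P_def PX matrix_mul_assoc)
  define Q where "Q = mat 1 - P"
  have Qsym: "transpose Q = Q" using Psym by (simp add: Q_def transpose_sub)
  define Z1 where "Z1 = P ** Z"
  define A where "A = X ** transpose X"
  define W where "W = Z1 ** transpose Z1"
  define K where "K = Z1 ** transpose Zp"
  define N where "N = Zp ** transpose Zp"
  define F where "F = fro2 N"
  define t where "t = fro2 Zp"
  define r where "r = CARD('r)"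
  define q where "q = rank Z"
  define C where "C = range (\<lambda>x. X *v x)"
  define R where "R = range (\<lambda>x. transpose Z *v x)"
  have dec: "fro2 (X ** transpose X - Z ** transpose Z) = fro2 (A - W) + 2 * fro2 K + F"
    unfolding A_def W_def K_def F_def N_def Z1_def Zp_def by (rule decomp[OF Psym Pidem PX])
  have Wsym: "transpose W = W" by (simp add: W_def matrix_transpose_mul)
  have subC: "subspace C" unfolding C_def by (rule subspace_range_mv)
  have PC: "P *v y \<in> C" for y
    by (simp add: C_def P_def matrix_vector_mul_assoc[symmetric])
  have WC: "\<forall>x\<in>C. W *v x \<in> C"
    using PC by (simp add: W_def Z1_def matrix_vector_mul_assoc[symmetric])
  obtain EC where EC: "EC \<subseteq> C" "orthonormal EC" "span EC = C"
      and eigW: "\<And>e. e \<in> EC \<Longrightarrow> W *v e = (e \<bullet> (W *v e)) *\<^sub>R e"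
    using spectral_subspace[OF Wsym subC WC] by blast
  have finEC: "finite EC" by (rule orthonormal_finite[OF EC(2)])
  have sb: "(X *v x) \<bullet> (X *v x) \<ge> s * (x \<bullet> x)" for x unfolding s_def by (rule gram_bounds(2))
  have injX: "inj ((*v) X)"
  proof (rule injI)
    fix x y assume "X *v x = X *v y"
    then have "X *v (x - y) = 0" by (simp add: matrix_vector_mult_diff_distrib)
    then have "s * ((x - y) \<bullet> (x - y)) \<le> 0" using sb[of "x - y"] by simp
    then have "(x - y) \<bullet> (x - y) \<le> 0" using spos by (simp add: mult_le_0_iff)
    then have "(x - y) \<bullet> (x - y) = 0" using inner_ge_zero[of "x - y"] by linarith
    then show "x = y" by simp
  qed
  have cardEC: "card EC = r"
  proof -
    have "card EC = dim C"
      using EC by (intro basis_card_eq_dim orthonormal_indep) auto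
    also have "\<dots> = rank X" unfolding C_def by (rule rank_dim_range[symmetric])
    also have "\<dots> = r" unfolding r_def using full_rank_injective injX by blast
    finally show ?thesis .
  qed
  define om where "om e = e \<bullet> (W *v e)" for e
  define a where "a e = e \<bullet> (A *v e)" for e
  define dfun where "dfun y = (Zp *v y) \<bullet> (Zp *v y)" for y
  have ee: "e \<bullet> e = 1" if "e \<in> EC" for e using EC(2) that by (simp add: orthonormal_def)
  have a_ge: "a e \<ge> s" if eEC: "e \<in> EC" for e
  proof -
    have "e \<in> C" using EC(1) eEC by blast
    then obtain x where ex: "e = X *v x" unfolding C_def by blast
    have "a e = e \<bullet> (X *v (transpose X *v e))"
      by (simp add: a_def A_def matrix_vector_mul_assoc)
    also have "\<dots> = (transpose X *v e) \<bullet> (transpose X *v e)" by (rule adjT)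
    also have "transpose X *v e = (transpose X ** X) *v x" by (simp add: ex matrix_vector_mul_assoc)
    finally have "a e = ((transpose X ** X) *v x) \<bullet> ((transpose X ** X) *v x)" .
    moreover have "((transpose X ** X) *v x) \<bullet> ((transpose X ** X) *v x) \<ge> s * ((X *v x) \<bullet> (X *v x))"
      unfolding s_def by (rule gram_bounds(3))
    moreover have "(X *v x) \<bullet> (X *v x) = 1" using ee[OF eEC] ex by simp
    ultimately show ?thesis by simp
  qed
  have om_eq: "om e = (transpose Z1 *v e) \<bullet> (transpose Z1 *v e)" for e
  proof -
    have "om e = e \<bullet> (Z1 *v (transpose Z1 *v e))" by (simp add: om_def W_def matrix_vector_mul_assoc)
    also have "\<dots> = (transpose Z1 *v e) \<bullet> (transpose Z1 *v e)" by (rule adjT)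
    finally show ?thesis .
  qed
  have om_nn: "om e \<ge> 0" for e by (simp add: om_eq)
  have KT: "transpose K *v e = Zp *v (transpose Z1 *v e)" for e
    by (simp add: K_def matrix_transpose_mul matrix_vector_mul_assoc)
  have AWe: "e \<bullet> ((A - W) *v e) = a e - om e" for e
    by (simp add: matrix_vector_mult_diff_rdistrib inner_diff_right a_def om_def)
  have low: "(\<Sum>e\<in>EC. (a e - om e)\<^sup>2 + 2 * dfun (transpose Z1 *v e)) \<le> fro2 (A - W) + 2 * fro2 K"
  proof -
    have "(\<Sum>e\<in>EC. (a e - om e)\<^sup>2) \<le> (\<Sum>e\<in>EC. ((A - W) *v e) \<bullet> ((A - W) *v e))"
    proof (rule sum_mono)
      fix e assume eEC: "e \<in> EC"
      have "(e \<bullet> ((A - W) *v e))\<^sup>2 \<le> (e \<bullet> e) * (((A - W) *v e) \<bullet> ((A - W) *v e))"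
        by (rule Cauchy_Schwarz_ineq)
      then show "(a e - om e)\<^sup>2 \<le> ((A - W) *v e) \<bullet> ((A - W) *v e)" using ee[OF eEC] AWe[of e] by simp
    qed
    also have "\<dots> \<le> fro2 (A - W)" by (rule fro2_bessel[OF EC(2)])
    finally have l1: "(\<Sum>e\<in>EC. (a e - om e)\<^sup>2) \<le> fro2 (A - W)" .
    have "(\<Sum>e\<in>EC. dfun (transpose Z1 *v e)) = (\<Sum>e\<in>EC. (transpose K *v e) \<bullet> (transpose K *v e))"
      by (simp add: KT dfun_def)
    also have "\<dots> \<le> fro2 (transpose K)" by (rule fro2_bessel[OF EC(2)])
    finally have l2: "(\<Sum>e\<in>EC. dfun (transpose Z1 *v e)) \<le> fro2 K" by (simp add: fro2_transpose)
    show ?thesis using l1 l2 by (simp add: sum.distrib sum_distrib_left[symmetric])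
  qed
  define Ep where "Ep = {e\<in>EC. om e > 0}"
  define E0 where "E0 = {e\<in>EC. om e = 0}"
  have EC_un: "EC = Ep \<union> E0" using om_nn by (auto simp: Ep_def E0_def less_eq_real_def)
  have EC_dis: "Ep \<inter> E0 = {}" by (auto simp: Ep_def E0_def)
  have finEp: "finite Ep" and finE0: "finite E0" using finEC by (auto simp: Ep_def E0_def)
  have cardsplit: "card Ep + card E0 = r"
    using card_Un_disjoint[OF finEp finE0 EC_dis] EC_un cardEC by simp
  define v where "v e = (1 / sqrt (om e)) *\<^sub>R (transpose Z1 *v e)" for e
  have Z1inner: "(transpose Z1 *v e) \<bullet> (transpose Z1 *v f) = om f * (e \<bullet> f)" if fEC: "f \<in> EC" for e f
  proof -
    have "(transpose Z1 *v e) \<bullet> (transpose Z1 *v f) = e \<bullet> (Z1 *v (transpose Z1 *v f))" by (rule adj)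
    also have "\<dots> = e \<bullet> (W *v f)" by (simp add: W_def matrix_vector_mul_assoc)
    also have "\<dots> = om f * (e \<bullet> f)" using eigW[OF fEC] by (simp add: om_def[symmetric])
    finally show ?thesis .
  qed
  have vv: "v e \<bullet> v f = (if e = f then 1 else 0)" if eE: "e \<in> Ep" and fE: "f \<in> Ep" for e f
  proof -
    have eEC: "e \<in> EC" and fEC: "f \<in> EC" and oe: "om e > 0" and of: "om f > 0"
      using eE fE by (auto simp: Ep_def)
    have "v e \<bullet> v f = (1 / sqrt (om e)) * (1 / sqrt (om f)) * (om f * (e \<bullet> f))"
      by (simp add: v_def Z1inner[OF fEC])
    also have "\<dots> = (if e = f then 1 else 0)"
    proof (cases "e = f")
      case True
      have "sqrt (om e) * sqrt (om e) = om e" using oe by simp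
      then show ?thesis using True ee[OF eEC] oe by (simp add: field_simps)
    next
      case False
      then have "e \<bullet> f = 0" using EC(2) eEC fEC by (simp add: orthonormal_def)
      then show ?thesis using False by simp
    qed
    finally show ?thesis .
  qed
  have injv: "inj_on v Ep"
  proof (rule inj_onI)
    fix e f assume "e \<in> Ep" "f \<in> Ep" "v e = v f"
    then have "v e \<bullet> v f = 1" using vv[of e e] by simp
    then show "e = f" using vv[OF \<open>e \<in> Ep\<close> \<open>f \<in> Ep\<close>] by (simp split: if_splits)
  qed
  define V where "V = v ` Ep"
  have orthV: "orthonormal V"
    unfolding orthonormal_def V_def
  proof (intro conjI ballI impI)
    fix x assume "x \<in> v ` Ep"
    then obtain e where e: "e \<in> Ep" "x = v e" by blast
    then show "x \<bullet> x = 1" using vv[of e e] by simp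
  next
    fix x y assume "x \<in> v ` Ep" "y \<in> v ` Ep" "x \<noteq> y"
    then obtain e f where ef: "e \<in> Ep" "f \<in> Ep" "x = v e" "y = v f" by blast
    then have "e \<noteq> f" using \<open>x \<noteq> y\<close> by blast
    then show "x \<bullet> y = 0" using vv[OF ef(1,2)] ef(3,4) by simp
  qed
  have finV: "finite V" unfolding V_def using finEp by simp
  have cardV: "card V = card Ep" unfolding V_def using injv by (rule card_image)
  have subR: "subspace R" unfolding R_def by (rule subspace_range_mv)
  have Z1T: "transpose Z1 = transpose Z ** P" by (simp add: Z1_def matrix_transpose_mul Psym)
  have VR: "V \<subseteq> R"
  proof
    fix w assume "w \<in> V"
    then obtain e where w: "w = v e" by (auto simp: V_def)
    have "w = transpose Z *v ((1 / sqrt (om e)) *\<^sub>R (P *v e))"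
      by (simp add: w v_def Z1T matrix_vector_mult_scaleR matrix_vector_mul_assoc)
    then show "w \<in> R" by (simp add: R_def)
  qed
  have dv: "dfun (transpose Z1 *v e) = om e * dfun (v e)" if eE: "e \<in> Ep" for e
  proof -
    have oe: "om e > 0" using eE by (simp add: Ep_def)
    have "dfun (v e) = (1 / sqrt (om e))\<^sup>2 * dfun (transpose Z1 *v e)"
      by (simp add: dfun_def v_def matrix_vector_mult_scaleR power2_eq_square)
    also have "(1 / sqrt (om e))\<^sup>2 = 1 / om e" using oe by (simp add: power_divide)
    finally show ?thesis using oe by simp
  qed
  define U' where "U' = {x \<in> R. \<forall>w\<in>V. w \<bullet> x = 0}"
  have subU': "subspace U'"
    using subR unfolding U'_def subspace_def by (auto simp: inner_add_right)
  have t0: "transpose (0::real^'r^'r) = 0" by (simp add: transpose_def vec_eq_iff)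
  obtain B2 where B2: "B2 \<subseteq> U'" "orthonormal B2" "span B2 = U'"
    using spectral_subspace[OF t0 subU'] subspace_0[OF subU'] by auto
  have finB2: "finite B2" by (rule orthonormal_finite[OF B2(2)])
  define B1 where "B1 = V \<union> B2"
  have VB2: "V \<inter> B2 = {}"
  proof (rule ccontr)
    assume "V \<inter> B2 \<noteq> {}"
    then obtain b where b: "b \<in> V" "b \<in> B2" by blast
    then have "b \<in> U'" using B2(1) by blast
    then have "\<forall>w\<in>V. w \<bullet> b = 0" by (simp add: U'_def)
    then have "b \<bullet> b = 0" using b(1) by blast
    moreover have "b \<bullet> b = 1" using orthV b(1) by (simp add: orthonormal_def)
    ultimately show False by simp
  qed
  have orthB1: "orthonormal B1"
    unfolding orthonormal_def B1_def
  proof (intro conjI ballI impI)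
    fix x assume "x \<in> V \<union> B2" then show "x \<bullet> x = 1" using orthV B2(2) by (auto simp: orthonormal_def)
  next
    fix x y assume xy: "x \<in> V \<union> B2" "y \<in> V \<union> B2" "x \<noteq> y"
    show "x \<bullet> y = 0"
    proof -
      { assume "x \<in> V" "y \<in> V" then have ?thesis using orthV xy(3) by (simp add: orthonormal_def) }
      moreover { assume "x \<in> B2" "y \<in> B2" then have ?thesis using B2(2) xy(3) by (simp add: orthonormal_def) }
      moreover { assume "x \<in> V" "y \<in> B2" then have ?thesis using B2(1) by (auto simp: U'_def) }
      moreover { assume "x \<in> B2" "y \<in> V" then have "y \<bullet> x = 0" using B2(1) by (auto simp: U'_def)
        then have ?thesis by (simp add: inner_commute) }
      ultimately show ?thesis using xy(1,2) by blast
    qed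
  qed
  have finB1: "finite B1" using finV finB2 by (simp add: B1_def)
  have cardB1: "card B1 = card Ep + card B2"
    using card_Un_disjoint[OF finV finB2 VB2] cardV by (simp add: B1_def)
  have B1R: "B1 \<subseteq> R" using VR B2(1) by (auto simp: B1_def U'_def)
  have cardB1q: "card B1 \<le> q"
  proof -
    have "card B1 \<le> dim R" by (rule independent_card_le_dim[OF B1R orthonormal_indep[OF orthB1]])
    also have "dim R = q" unfolding R_def q_def by (simp add: rank_dim_range[symmetric] rank_transpose)
    finally show ?thesis .
  qed
  have Rspan: "R \<subseteq> span B1"
  proof
    fix x assume xR: "x \<in> R"
    define pr where "pr = (\<Sum>w\<in>V. (x \<bullet> w) *\<^sub>R w)"
    have prR: "pr \<in> R" unfolding pr_def using VR subR
      by (intro subspace_sum[OF subR] subspace_scale[OF subR]) auto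
    have "x - pr \<in> U'"
    proof -
      have "x - pr \<in> R" using xR prR by (rule subspace_diff[OF subR])
      moreover have "w \<bullet> (x - pr) = 0" if "w \<in> V" for w
        using orthonormal_coeff[OF orthV that, of "\<lambda>w. x \<bullet> w"] unfolding pr_def
        by (simp add: inner_diff_right inner_commute)
      ultimately show ?thesis by (simp add: U'_def)
    qed
    then have "x - pr \<in> span B1" using B2(3) span_mono[of B2 B1] by (auto simp: B1_def)
    moreover have "pr \<in> span B1" unfolding pr_def
      by (intro span_sum span_scale span_base) (auto simp: B1_def)
    ultimately have "(x - pr) + pr \<in> span B1" by (rule span_add)
    then show "x \<in> span B1" by simp
  qed
  have ZpQ: "Zp = Q ** Z" by (simp add: Zp_def Q_def)
  have rowsR: "Zp $ i \<in> R" for i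
  proof -
    have "Zp $ i = transpose Zp *v axis i 1" by (rule transpose_axis[symmetric])
    also have "\<dots> = transpose Z *v (Q *v axis i 1)"
      by (simp add: ZpQ matrix_transpose_mul Qsym matrix_vector_mul_assoc)
    finally show ?thesis by (simp add: R_def)
  qed
  have tsum: "t = (\<Sum>b\<in>B1. dfun b)"
    unfolding t_def dfun_def using rowsR Rspan by (intro fro2_parseval[OF orthB1, symmetric]) auto
  have dnn: "dfun b \<ge> 0" for b by (simp add: dfun_def)
  have d2sum: "(\<Sum>b\<in>B1. (dfun b)\<^sup>2) \<le> F"
  proof -
    define Gp where "Gp = transpose Zp ** Zp"
    have "(\<Sum>b\<in>B1. (dfun b)\<^sup>2) \<le> (\<Sum>b\<in>B1. (Gp *v b) \<bullet> (Gp *v b))"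
    proof (rule sum_mono)
      fix b assume bB: "b \<in> B1"
      have bb: "b \<bullet> b = 1" using orthB1 bB by (simp add: orthonormal_def)
      have "dfun b = b \<bullet> (Gp *v b)" unfolding dfun_def Gp_def by (rule gram_inner[symmetric])
      moreover have "(b \<bullet> (Gp *v b))\<^sup>2 \<le> (b \<bullet> b) * ((Gp *v b) \<bullet> (Gp *v b))" by (rule Cauchy_Schwarz_ineq)
      ultimately show "(dfun b)\<^sup>2 \<le> (Gp *v b) \<bullet> (Gp *v b)" using bb by simp
    qed
    also have "\<dots> \<le> fro2 Gp" by (rule fro2_bessel[OF orthB1])
    also have "fro2 Gp = F" unfolding Gp_def F_def N_def by (rule fro2_gram[symmetric])
    finally show ?thesis .
  qed
  define phi where "phi d = 2*c * s*d - c\<^sup>2*d\<^sup>2" for d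
  define g where "g e = (a e - om e)\<^sup>2 + 2 * dfun (transpose Z1 *v e)" for e
  have gEp: "phi (dfun (v e)) \<le> g e" if eE: "e \<in> Ep" for e
  proof -
    have eEC: "e \<in> EC" using eE by (simp add: Ep_def)
    have "2*c * s*dfun (v e) - c\<^sup>2*(dfun (v e))\<^sup>2 \<le> (a e - om e)\<^sup>2 + 2* om e*dfun (v e)"
      by (rule g_bound[OF a_ge[OF eEC] less_imp_le[OF spos] om_nn dnn c0 c1])
    then show ?thesis using dv[OF eE] by (simp add: phi_def g_def mult.assoc)
  qed
  have gE0: "s\<^sup>2 \<le> g e" if eE: "e \<in> E0" for e
  proof -
    have eEC: "e \<in> EC" and o0: "om e = 0" using eE by (auto simp: E0_def)
    have "s\<^sup>2 \<le> (a e)\<^sup>2" using a_ge[OF eEC] spos by (intro power_mono) auto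
    then show ?thesis using o0 dnn[of "transpose Z1 *v e"] by (simp add: g_def)
  qed
  have sumEC: "(\<Sum>e\<in>Ep. phi (dfun (v e))) + real (card E0) * s\<^sup>2 \<le> (\<Sum>e\<in>EC. g e)"
  proof -
    have "(\<Sum>e\<in>EC. g e) = (\<Sum>e\<in>Ep. g e) + (\<Sum>e\<in>E0. g e)"
      unfolding EC_un by (rule sum.union_disjoint[OF finEp finE0 EC_dis])
    moreover have "(\<Sum>e\<in>Ep. phi (dfun (v e))) \<le> (\<Sum>e\<in>Ep. g e)" by (rule sum_mono) (rule gEp)
    moreover have "real (card E0) * s\<^sup>2 \<le> (\<Sum>e\<in>E0. g e)"
      using sum_mono[of E0 "\<lambda>_. s\<^sup>2" g] gE0 by simp
    ultimately show ?thesis by linarith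
  qed
  have reidx: "(\<Sum>e\<in>Ep. phi (dfun (v e))) = (\<Sum>b\<in>V. phi (dfun b))"
    unfolding V_def using sum.reindex[OF injv, of "\<lambda>b. phi (dfun b)"] by simp
  have splitB1: "(\<Sum>b\<in>B1. phi (dfun b)) = (\<Sum>b\<in>V. phi (dfun b)) + (\<Sum>b\<in>B2. phi (dfun b))"
    unfolding B1_def by (rule sum.union_disjoint[OF finV finB2 VB2])
  have B2bound: "(\<Sum>b\<in>B2. phi (dfun b)) \<le> real (card B2) * s\<^sup>2"
    using sum_bounded_above[of B2 "\<lambda>b. phi (dfun b)" "s\<^sup>2"] phi_le by (simp add: phi_def)
  have B1phi: "(\<Sum>b\<in>B1. phi (dfun b)) = 2*c * s*t - c\<^sup>2 * (\<Sum>b\<in>B1. (dfun b)\<^sup>2)"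
    by (simp add: phi_def tsum sum_subtractf sum_distrib_left mult.assoc)
  have "c\<^sup>2 * (\<Sum>b\<in>B1. (dfun b)\<^sup>2) \<le> c\<^sup>2 * F" using d2sum by (intro mult_left_mono) auto
  then have B1low: "2*c * s*t - c\<^sup>2*F \<le> (\<Sum>b\<in>B1. phi (dfun b))" using B1phi by linarith
  have rq: "real r - real q \<le> real (card E0) - real (card B2)"
    using cardsplit cardB1 cardB1q by linarith
  have "(real r - real q) * s\<^sup>2 \<le> (real (card E0) - real (card B2)) * s\<^sup>2"
    using rq by (intro mult_right_mono) auto
  then have main: "(real r - real q) * s\<^sup>2 + 2*c * s*t - c\<^sup>2*F \<le> (\<Sum>e\<in>EC. g e)"
    using B1low splitB1 B2bound reidx sumEC by (simp add: algebra_simps)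
  have "(\<Sum>e\<in>EC. g e) \<le> fro2 (A - W) + 2 * fro2 K" using low by (simp add: g_def)
  then show "(real CARD('r) - real (rank Z)) * s\<^sup>2 + 2*c * s * fro2 Zp - c\<^sup>2 * fro2 (Zp ** transpose Zp)
           \<le> fro2 (X ** transpose X - Z ** transpose Z) - fro2 (Zp ** transpose Zp)"
    using main dec by (simp add: r_def q_def t_def F_def N_def)
  have "t\<^sup>2 = (\<Sum>b\<in>B1. 1 * dfun b)\<^sup>2" by (simp add: tsum)
  also have "\<dots> \<le> (\<Sum>b\<in>B1. 1\<^sup>2) * (\<Sum>b\<in>B1. (dfun b)\<^sup>2)" by (rule Cauchy_Schwarz_ineq_sum)
  also have "\<dots> = real (card B1) * (\<Sum>b\<in>B1. (dfun b)\<^sup>2)" by simp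
  also have "\<dots> \<le> real q * F"
    using cardB1q d2sum by (intro mult_mono) (auto intro: sum_nonneg)
  finally show "(fro2 Zp)\<^sup>2 \<le> real (rank Z) * fro2 (Zp ** transpose Zp)"
    by (simp add: t_def q_def F_def N_def)
qed


declare transpose_matrix_vector [simp del]

theorem lemma11:
  fixes X Z :: "real^'r^'n"
  assumes neq: "X ** transpose X \<noteq> Z ** transpose Z"
    and rk1: "1 \<le> rank Z" and rk2: "rank Z \<le> CARD('r)"
  shows "let Zp = (mat 1 - X ** pinv X) ** Z;
             D = frob_norm (X ** transpose X - Z ** transpose Z);
             \<alpha> = frob_norm (Zp ** transpose Zp) / D;
             \<beta> = (if Zp = 0 then (sigma_min X)^2 / D
                  else ((sigma_min X)^2 / D) *
                       (trace (Zp ** transpose Zp) / frob_norm (Zp ** transpose Zp)));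
             \<rho> = real CARD('r) / real (rank Z)
         in (\<beta> \<le> \<alpha> \<longrightarrow> \<alpha>^2 + \<rho> * \<beta>^2 \<le> 1) \<and>
            (\<beta> \<ge> \<alpha> \<longrightarrow> \<alpha> \<le> 1 / sqrt (1 + \<rho>))"
proof -
  define P where "P = X ** pinv X"
  define Zp where "Zp = (mat 1 - X ** pinv X) ** Z"
  define D where "D = frob_norm (X ** transpose X - Z ** transpose Z)"
  define DD where "DD = fro2 (X ** transpose X - Z ** transpose Z)"
  define N where "N = Zp ** transpose Zp"
  define f where "f = frob_norm N"
  define F where "F = fro2 N"
  define t where "t = fro2 Zp"
  define s where "s = min_eigenvalue (transpose X ** X)"
  define \<rho> where "\<rho> = real CARD('r) / real (rank Z)"
  have s0: "s \<ge> 0" unfolding s_def by (rule gram_bounds(1))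
  have sig: "(sigma_min X)\<^sup>2 = s" using s0 by (simp add: sigma_min_def s_def)
  have pen: "penrose X (pinv X)" by (rule pinv_penrose)
  have Psym: "transpose P = P" using pen by (simp add: penrose_def P_def)
  have PX: "P ** X = X" using pen by (simp add: penrose_def P_def)
  have Pidem: "P ** P = P" by (metis P_def PX matrix_mul_assoc)
  have dec: "DD = fro2 (X ** transpose X - (P ** Z) ** transpose (P ** Z)) + 2 * fro2 ((P ** Z) ** transpose Zp) + F"
    unfolding DD_def F_def N_def Zp_def P_def[symmetric] by (rule decomp[OF Psym Pidem PX])
  have FDD: "F \<le> DD" using dec fro2_nonneg by (smt (verit))
  have DDpos: "DD > 0"
  proof -
    have "X ** transpose X - Z ** transpose Z \<noteq> 0" using neq by simp
    then have "DD \<noteq> 0" unfolding DD_def by (simp add: fro2_eq_0)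
    then show ?thesis using fro2_nonneg unfolding DD_def by (simp add: less_le)
  qed
  have D2: "D\<^sup>2 = DD" by (simp add: D_def DD_def frob_sq)
  have Dpos: "D > 0"
  proof -
    have "D \<ge> 0" unfolding D_def by (rule frob_nonneg)
    moreover have "D \<noteq> 0" using D2 DDpos by auto
    ultimately show ?thesis by simp
  qed
  have f2: "f\<^sup>2 = F" by (simp add: f_def F_def frob_sq)
  have f0: "f \<ge> 0" by (simp add: f_def frob_nonneg)
  have trN: "trace N = t" by (simp add: N_def t_def trace_fro2)
  have q1: "real (rank Z) \<ge> 1" using rk1 by simp
  have rq: "real CARD('r) \<ge> real (rank Z)" using rk2 by simp
  have rho0: "\<rho> \<ge> 0" by (simp add: \<rho>_def)
  have goal: "(\<beta> \<le> \<alpha> \<longrightarrow> \<alpha>^2 + \<rho> * \<beta>^2 \<le> 1) \<and> (\<beta> \<ge> \<alpha> \<longrightarrow> \<alpha> \<le> 1 / sqrt (1 + \<rho>))"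
    if al: "\<alpha> = f / D" and be: "\<beta> = (if Zp = 0 then s / D else (s / D) * (t / f))" for \<alpha> \<beta>
  proof (cases "Zp = 0")
    case True
    then have "f = 0" by (simp add: f_def N_def frob_fro2 fro2_def)
    then have a0: "\<alpha> = 0" using al by simp
    have b0: "\<beta> \<ge> 0" using be True s0 Dpos by simp
    show ?thesis using a0 b0 rho0 by auto
  next
    case False
    have tpos: "t > 0" using False fro2_nonneg[of Zp] fro2_eq_0[of Zp] by (simp add: t_def less_le)
    have Fpos: "F > 0"
    proof -
      have "F \<noteq> 0"
      proof
        assume "F = 0"
        then have "N = 0" by (simp add: F_def fro2_eq_0)
        then have "t = 0" using trN by (simp add: trace_def)
        then show False using tpos by simp
      qed
      then show ?thesis using fro2_nonneg by (simp add: F_def less_le)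
    qed
    have fpos: "f > 0"
    proof -
      have "f \<noteq> 0" using f2 Fpos by auto
      then show ?thesis using f0 by simp
    qed
    have a2: "\<alpha>\<^sup>2 = F / DD" using al f2 D2 by (simp add: power_divide)
    have sqrt_goal: "\<alpha> \<le> 1 / sqrt (1 + \<rho>)" if h: "F * (1 + \<rho>) \<le> DD"
    proof -
      have "\<alpha>\<^sup>2 * (1 + \<rho>) = F * (1 + \<rho>) / DD" using a2 by simp
      also have "\<dots> \<le> 1" using h DDpos by simp
      finally have "\<alpha>\<^sup>2 * (1 + \<rho>) \<le> 1" .
      then have "\<alpha>\<^sup>2 \<le> 1 / (1 + \<rho>)" using rho0 by (simp add: le_divide_eq)
      then have "sqrt (\<alpha>\<^sup>2) \<le> sqrt (1 / (1 + \<rho>))" by (rule real_sqrt_le_mono)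
      moreover have "\<alpha> \<ge> 0" using al f0 Dpos by simp
      ultimately show ?thesis by (simp add: real_sqrt_divide)
    qed
    show ?thesis
    proof (cases "s = 0")
      case True
      then have b0: "\<beta> = 0" using be False by simp
      have "\<alpha>\<^sup>2 \<le> 1" using a2 FDD DDpos by simp
      moreover have "\<alpha> \<ge> 0" using al f0 Dpos by simp
      ultimately show ?thesis using b0 rho0 by (auto simp: zero_le_divide_iff)
    next
      case snz: False
      then have spos: "s > 0" using s0 by simp
      have key: "\<And>c. 0 \<le> c \<Longrightarrow> c \<le> 1 \<Longrightarrow>
          (real CARD('r) - real (rank Z)) * s\<^sup>2 + 2*c * s*t - c\<^sup>2*F \<le> DD - F"
      proof -
        fix c :: real assume "0 \<le> c" "c \<le> 1"
        from core(1)[where X=X and Z=Z and c=c, OF spos[unfolded s_def] this]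
        show "(real CARD('r) - real (rank Z)) * s\<^sup>2 + 2*c * s*t - c\<^sup>2*F \<le> DD - F"
          by (simp only: s_def[symmetric] t_def[symmetric] F_def N_def Zp_def[symmetric] DD_def[symmetric])
      qed
      have tq: "t\<^sup>2 \<le> real (rank Z) * F"
        using core(2)[where X=X and Z=Z and c=0, OF spos[unfolded s_def]]
        by (simp only: s_def[symmetric] t_def[symmetric] F_def N_def Zp_def[symmetric] order_refl zero_le_one)
      have fs1: "real CARD('r) / real (rank Z) * ((s*t)\<^sup>2 / F) \<le> DD - F" if "s*t \<le> F"
        by (rule final_scalar(1)[of s t F "real (rank Z)" "real CARD('r)" "DD - F"])
          (use s0 tpos Fpos q1 rq tq key that in auto)
      have fs2: "real CARD('r) / real (rank Z) * F \<le> DD - F" if "s*t \<ge> F"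
        by (rule final_scalar(2)[of s t F "real (rank Z)" "real CARD('r)" "DD - F"])
          (use s0 tpos Fpos q1 rq tq key that in auto)
      have bexp: "\<beta> = (s*t) / (D*f)" using be False by simp
      show ?thesis
      proof (intro conjI impI)
        assume ba: "\<beta> \<le> \<alpha>"
        have "(s*t) / (D*f) \<le> f / D" using ba bexp al by simp
        then have "s*t \<le> f / D * (D*f)" using Dpos fpos by (simp add: divide_le_eq)
        also have "f / D * (D*f) = f*f" using Dpos by simp
        finally have "s*t \<le> f*f" .
        then have stF: "s*t \<le> F" using f2 by (simp add: power2_eq_square)
        have h: "\<rho> * ((s*t)\<^sup>2 / F) \<le> DD - F" using fs1[OF stF] by (simp add: \<rho>_def)
        have b2: "\<beta>\<^sup>2 = (s*t)\<^sup>2 / (DD * F)" using bexp f2 D2 by (simp add: power_divide power_mult_distrib)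
        have "\<alpha>\<^sup>2 + \<rho> * \<beta>\<^sup>2 = F / DD + \<rho> * ((s*t)\<^sup>2 / (DD * F))" by (simp only: a2 b2)
        also have "\<dots> = (F + \<rho> * ((s*t)\<^sup>2 / F)) / DD"
          using DDpos Fpos by (simp add: field_simps)
        also have "\<dots> \<le> 1" using h DDpos by simp
        finally show "\<alpha>^2 + \<rho> * \<beta>^2 \<le> 1" .
      next
        assume ab: "\<alpha> \<le> \<beta>"
        have "f / D \<le> (s*t) / (D*f)" using ab bexp al by simp
        then have "f / D * (D*f) \<le> s*t" using Dpos fpos by (simp add: le_divide_eq)
        moreover have "f / D * (D*f) = f*f" using Dpos by simp
        ultimately have "f*f \<le> s*t" by simp
        then have stF: "s*t \<ge> F" using f2 by (simp add: power2_eq_square)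
        have h: "\<rho> * F \<le> DD - F" using fs2[OF stF] by (simp add: \<rho>_def)
        show "\<alpha> \<le> 1 / sqrt (1 + \<rho>)" using sqrt_goal h by (simp add: algebra_simps)
      qed
    qed
  qed
  have eqa: "frob_norm (Zp ** transpose Zp) / D = f / D" by (simp add: f_def N_def)
  have eqb: "(if Zp = 0 then (sigma_min X)^2 / D else ((sigma_min X)^2 / D) *
          (trace (Zp ** transpose Zp) / frob_norm (Zp ** transpose Zp))) =
        (if Zp = 0 then s / D else (s / D) * (t / f))"
    by (simp add: sig f_def N_def trN[unfolded N_def])
  show ?thesis
    unfolding Let_def Zp_def[symmetric] D_def[symmetric] \<rho>_def[symmetric]
    by (rule goal[OF eqa eqb])
qed


end
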